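(* For all fixed probability distributions $P\neq Q$ on $\mathbb{R}$ there exists a constant $c>0$ (depending on $P,Q$) such that if $k_n\in\{2,\dots,n\}$ satisfies $k_n\ge c\log n$ for all large $n$, then the optimal risk satisfies $R(T^* )\to 0$ as $n\to\infty$.
   Context: Weighted hidden clique model. For $n\ge 2$ and $k\in\{2,\dots,n\}$, let $E=\{(i,j):1\le i<j\le n\}$ and for $S\subseteq[n]$ let $E(S)=\{(i,j):i,j\in S,\ i<j\}$. The observation is $\mathbf{X}=(X_e)_{e\in E}$. Under $\mathcal{H}_0$ (law $\mathbb{P}_0$) the $X_e$ are i.i.d. $P$. Under $\mathcal{H}_1$ (law $\mathbb{P}_1$) a uniformly random $k$-subset $S^*\subseteq[n]$ is chosen and, conditionally on $S^*$, the $X_e$ are independent with $X_e\sim Q$ for $e\in E(S^* )$ and $X_e\sim P$ otherwise. The risk of a test $T:\mathbb{R}^{\binom n2}\to\{0,1\}$ is $R(T)=\mathbb{P}_0(T=1)+\mathbb{P}_1(T=0)$, and $R(T^* )=\inf_T R(T)$ is the optimal risk. *)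

theory Defs
  imports "HOL-Probability.Probability"
begin

definition edges :: "nat \<Rightarrow> (nat \<times> nat) set" where
  "edges n = {(i, j). 1 \<le> i \<and> i < j \<and> j \<le> n}"

definition edges_in :: "nat set \<Rightarrow> (nat \<times> nat) set" where
  "edges_in S = {(i, j). i \<in> S \<and> j \<in> S \<and> i < j}"

definition obs_space :: "nat \<Rightarrow> ((nat \<times> nat) \<Rightarrow> real) measure" where
  "obs_space n = PiM (edges n) (\<lambda>_. borel)"

definition null_law :: "nat \<Rightarrow> real measure \<Rightarrow> ((nat \<times> nat) \<Rightarrow> real) measure" where
  "null_law n P = PiM (edges n) (\<lambda>_. P)"

definition planted_law ::
  "nat \<Rightarrow> real measure \<Rightarrow> real measure \<Rightarrow> nat set \<Rightarrow> ((nat \<times> nat) \<Rightarrow> real) measure" where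
  "planted_law n P Q S = PiM (edges n) (\<lambda>e. if e \<in> edges_in S then Q else P)"

definition ksubsets :: "nat \<Rightarrow> nat \<Rightarrow> nat set set" where
  "ksubsets n k = {S. S \<subseteq> {1..n} \<and> card S = k}"

definition alt_prob ::
  "nat \<Rightarrow> nat \<Rightarrow> real measure \<Rightarrow> real measure \<Rightarrow> ((nat \<times> nat) \<Rightarrow> real) set \<Rightarrow> real" where
  "alt_prob n k P Q A =
     (\<Sum>S\<in>ksubsets n k. measure (planted_law n P Q S) A) / real (card (ksubsets n k))"

text \<open>Optimal risk: infimum over (measurable) tests T = indicator of the rejection
  region A of P_0(T=1) + P_1(T=0).\<close>
definition optimal_risk :: "nat \<Rightarrow> nat \<Rightarrow> real measure \<Rightarrow> real measure \<Rightarrow> real" where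
  "optimal_risk n k P Q =
     (INF A \<in> sets (obs_space n).
        measure (null_law n P) A + alt_prob n k P Q (space (obs_space n) - A))"

end

theory Submission imports Defs begin

lemma indep_coord:
  fixes F :: "'i \<Rightarrow> real measure" and B :: "real set"
  assumes P: "\<And>i. prob_space (F i)" and S: "\<And>i. sets (F i) = sets borel"
    and fin: "finite I" and JI: "J \<subseteq> I" and Jne: "J \<noteq> {}"
  shows "prob_space.indep_vars (PiM I F) (\<lambda>_. borel) (\<lambda>e x. x e) J"
proof -
  interpret F: product_prob_space F by (rule product_prob_spaceI) (rule P)
  have PS: "prob_space (PiM I F)" by (rule prob_space_PiM) (rule P)
  have rv: "(\<lambda>x. x e) \<in> borel_measurable (PiM I F)" for e
  proof (cases "e \<in> I")
    case True
    then have "(\<lambda>x. x e) \<in> measurable (PiM I F) (F e)" by simp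
    then show ?thesis using measurable_cong_sets[OF refl S] by blast
  next
    case False
    have "(\<lambda>x. undefined) \<in> borel_measurable (PiM I F)" by simp
    moreover have "\<And>x. x \<in> space (PiM I F) \<Longrightarrow> x e = undefined"
      using False by (auto simp: space_PiM PiE_def extensional_def)
    ultimately show ?thesis using measurable_cong by (smt (verit))
  qed
  have d1: "distr (PiM I F) borel (\<lambda>x. x e) = F e" if "e \<in> I" for e
  proof -
    have "distr (PiM I F) borel (\<lambda>x. x e) = distr (PiM I F) (F e) (\<lambda>x. x e)"
      by (rule distr_cong) (auto simp: S)
    also have "\<dots> = F e" using distr_PiM_component[of I F e] P that by simp
    finally show ?thesis .
  qed
  have "distr (PiM I F) (PiM J (\<lambda>_. borel)) (\<lambda>x. \<lambda>i\<in>J. x i) = distr (PiM I F) (PiM J F) (\<lambda>x. restrict x J)"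
    by (rule distr_cong) (auto intro!: sets_PiM_cong simp: S)
  also have "\<dots> = PiM J F" using F.distr_restrict[OF JI fin] by simp
  also have "\<dots> = PiM J (\<lambda>e. distr (PiM I F) borel (\<lambda>x. x e))"
    by (rule PiM_cong) (use d1 JI in auto)
  finally show ?thesis
    using prob_space.indep_vars_iff_distr_eq_PiM[OF PS Jne, where M'="\<lambda>_. borel" and X="\<lambda>e x. x e"] rv by simp
qed

lemma hoeff:
  fixes F :: "'i \<Rightarrow> real measure" and B :: "real set"
  assumes P: "\<And>i. prob_space (F i)" and S: "\<And>i. sets (F i) = sets borel"
    and fin: "finite I" and JI: "J \<subseteq> I" and Jne: "J \<noteq> {}"
    and B: "B \<in> sets borel" and r: "\<And>e. e \<in> J \<Longrightarrow> measure (F e) B = r"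
    and eps: "0 \<le> \<epsilon>"
  shows "measure (PiM I F) {x\<in>space (PiM I F). (\<Sum>e\<in>J. indicator B (x e)) \<ge> real (card J) * r + \<epsilon>}
           \<le> exp (-2 * \<epsilon>\<^sup>2 / real (card J))"
    and "measure (PiM I F) {x\<in>space (PiM I F). (\<Sum>e\<in>J. indicator B (x e)) \<le> real (card J) * r - \<epsilon>}
           \<le> exp (-2 * \<epsilon>\<^sup>2 / real (card J))"
proof -
  have PS: "prob_space (PiM I F)" by (rule prob_space_PiM) (rule P)
  have ind0: "prob_space.indep_vars (PiM I F) (\<lambda>_. borel) (\<lambda>e x. x e) J"
    by (rule indep_coord[OF P S fin JI Jne])
  have ind: "prob_space.indep_vars (PiM I F) (\<lambda>_. borel) (\<lambda>e x. indicator B (x e) :: real) J"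
    by (rule prob_space.indep_vars_compose2[OF PS ind0]) (use B in simp)
  have finJ: "finite J" using fin JI finite_subset by blast
  have ex: "integral\<^sup>L (PiM I F) (\<lambda>x. indicator B (x e) :: real) = r" if e: "e \<in> J" for e
  proof -
    have eI: "e \<in> I" using e JI by blast
    have m: "(\<lambda>x. x e) \<in> measurable (PiM I F) (F e)" using eI by simp
    have BF: "B \<in> sets (F e)" using B S by simp
    have "integral\<^sup>L (PiM I F) (\<lambda>x. indicator B (x e) :: real)
        = integral\<^sup>L (distr (PiM I F) (F e) (\<lambda>x. x e)) (indicator B)"
      by (rule integral_distr[symmetric]) (use m BF in auto)
    also have "distr (PiM I F) (F e) (\<lambda>x. x e) = F e"
      using distr_PiM_component[of I F e] P eI by simp
    also have "integral\<^sup>L (F e) (indicator B :: real \<Rightarrow> real) = measure (F e) B"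
      using BF prob_space.finite_measure[OF P[of e]] by (simp add: integral_indicator finite_measure.emeasure_finite)
    finally show ?thesis using r[OF e] by simp
  qed
  interpret H: Hoeffding_ineq "PiM I F" J "\<lambda>e x. indicator B (x e)" "\<lambda>_. 0" "\<lambda>_. 1" "real (card J) * r"
  proof unfold_locales
    show "finite J" by (rule finJ)
    show "prob_space.indep_vars (PiM I F) (\<lambda>_. borel) (\<lambda>e x. indicator B (x e) :: real) J" by (rule ind)
    show "AE x in PiM I F. indicator B (x e) \<in> {0..1::real}" if "e \<in> J" for e
      by (rule AE_I2) (auto simp: indicator_def)
    show "real (card J) * r \<equiv> (\<Sum>e\<in>J. integral\<^sup>L (PiM I F) (\<lambda>x. indicator B (x e)))"
      by (rule eq_reflection) (use ex in simp)
  qed (insert PS, auto simp: prob_space_def finite_measure_def sigma_finite_measure_def prob_space_axioms_def finite_measure_axioms_def)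
  have pos: "(\<Sum>e\<in>J. ((1::real) - 0)\<^sup>2) > 0" using finJ Jne by (simp add: card_gt_0_iff)
  show "measure (PiM I F) {x\<in>space (PiM I F). (\<Sum>e\<in>J. indicator B (x e)) \<ge> real (card J) * r + \<epsilon>}
           \<le> exp (-2 * \<epsilon>\<^sup>2 / real (card J))"
    using H.Hoeffding_ineq_ge[OF eps pos] by simp
  show "measure (PiM I F) {x\<in>space (PiM I F). (\<Sum>e\<in>J. indicator B (x e)) \<le> real (card J) * r - \<epsilon>}
           \<le> exp (-2 * \<epsilon>\<^sup>2 / real (card J))"
    using H.Hoeffding_ineq_le[OF eps pos] by simp
qed

lemma card_edges_in:
  assumes "finite S"
  shows "card (edges_in S) = card S choose 2"
proof -
  have "bij_betw (\<lambda>(i,j). {i,j}) (edges_in S) {T. T \<subseteq> S \<and> card T = 2}"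
  proof (rule bij_betwI')
    fix x y assume "x \<in> edges_in S" "y \<in> edges_in S"
    then show "((\<lambda>(i,j). {i,j}) x = (\<lambda>(i,j). {i,j}) y) = (x = y)"
      by (cases x; cases y) (auto simp: edges_in_def doubleton_eq_iff)
  next
    fix x assume "x \<in> edges_in S"
    then show "(\<lambda>(i,j). {i,j}) x \<in> {T. T \<subseteq> S \<and> card T = 2}"
      by (cases x) (auto simp: edges_in_def)
  next
    fix T assume "T \<in> {T. T \<subseteq> S \<and> card T = (2::nat)}"
    then obtain a b where T: "T = {a,b}" "a \<noteq> b" "a \<in> S" "b \<in> S"
      by (auto simp: card_2_iff)
    show "\<exists>x\<in>edges_in S. T = (\<lambda>(i,j). {i,j}) x"
    proof (cases "a < b")
      case True then show ?thesis using T by (intro bexI[of _ "(a,b)"]) (auto simp: edges_in_def)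
    next
      case False then show ?thesis using T by (intro bexI[of _ "(b,a)"]) (auto simp: edges_in_def)
    qed
  qed
  then have "card (edges_in S) = card {T. T \<subseteq> S \<and> card T = 2}" by (rule bij_betw_same_card)
  also have "\<dots> = card S choose 2" by (rule n_subsets[OF assms])
  finally show ?thesis .
qed

lemma edges_in_sub: "S \<subseteq> {1..n} \<Longrightarrow> edges_in S \<subseteq> edges n"
  by (auto simp: edges_in_def edges_def)

lemma finite_edges: "finite (edges n)"
proof -
  have "edges n \<subseteq> {1..n} \<times> {1..n}" by (auto simp: edges_def)
  then show ?thesis using finite_subset by blast
qed

lemma card_ksubsets: "card (ksubsets n k) = n choose k"
  unfolding ksubsets_def using n_subsets[of "{1..n}" k] by simp

lemma finite_ksubsets: "finite (ksubsets n k)"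
proof -
  have "ksubsets n k \<subseteq> Pow {1..n}" by (auto simp: ksubsets_def)
  then show ?thesis using finite_subset by blast
qed

lemma choose_B:
  fixes P Q :: "real measure"
  assumes "prob_space P" and "sets P = sets borel"
    and "prob_space Q" and "sets Q = sets borel"
    and "P \<noteq> Q"
  shows "\<exists>B\<in>sets borel. measure P B < measure Q B"
proof -
  interpret P: prob_space P by fact
  interpret Q: prob_space Q by fact
  obtain A where A: "A \<in> sets borel" "measure P A \<noteq> measure Q A"
  proof (rule ccontr)
    assume "\<not> thesis"
    then have h: "\<And>A. A \<in> sets borel \<Longrightarrow> measure P A = measure Q A" using that by blast
    have "P = Q"
    proof (rule measure_eqI)
      show "sets P = sets Q" using assms by simp
      fix A assume "A \<in> sets P"
      then show "emeasure P A = emeasure Q A"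
        using h[of A] assms by (simp add: P.emeasure_eq_measure Q.emeasure_eq_measure)
    qed
    then show False using assms by simp
  qed
  show ?thesis
  proof (cases "measure P A < measure Q A")
    case True then show ?thesis using A by blast
  next
    case False
    have sp: "space P = UNIV" "space Q = UNIV"
      using sets_eq_imp_space_eq[OF assms(2)] sets_eq_imp_space_eq[OF assms(4)] by auto
    have "measure P (UNIV - A) = 1 - measure P A"
      using P.prob_compl[of A] A assms sp by simp
    moreover have "measure Q (UNIV - A) = 1 - measure Q A"
      using Q.prob_compl[of A] A assms sp by simp
    moreover have "UNIV - A \<in> sets borel" using A by auto
    ultimately show ?thesis using False A by (intro bexI[of _ "UNIV - A"]) auto
  qed
qed

lemma choose2_real: "real (k choose 2) = real k * (real k - 1) / 2"
proof (cases k)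
  case 0 then show ?thesis by simp
next
  case (Suc j)
  have "k choose 2 = k * j div 2" using choose_two[of k] Suc by simp
  moreover have "even (k * j)" using Suc by simp
  ultimately have "2 * (k choose 2) = k * j" by simp
  then have "2 * real (k choose 2) = real k * real j" by (metis of_nat_mult of_nat_numeral)
  then show ?thesis using Suc by simp
qed

lemma risk_bound:
  fixes P Q :: "real measure" and B :: "real set"
  assumes PP: "prob_space P" and PS: "sets P = sets borel"
    and QQ: "prob_space Q" and QS: "sets Q = sets borel"
    and B: "B \<in> sets borel" and pq: "measure P B < measure Q B"
    and k2: "2 \<le> k" and kn: "k \<le> n"
  shows "optimal_risk n k P Q \<le>
    2 * exp (real k * ln (real n) - ((measure Q B - measure P B)/2)^2 * real k * (real k - 1))"
proof -
  define p where "p = measure P B"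
  define q where "q = measure Q B"
  define \<delta> where "\<delta> = (q - p) / 2"
  define t where "t = (p + q) / 2"
  define m where "m = real (k choose 2)"
  define K where "K = ksubsets n k"
  define N where "N = (\<lambda>S x. (\<Sum>e\<in>edges_in S. indicator B (x e) :: real))"
  define U where "U = (\<lambda>S. {x\<in>space (obs_space n). t * m \<le> N S x})"
  define A where "A = (\<Union>S\<in>K. U S)"
  define FS where "FS = (\<lambda>S e. if e \<in> edges_in S then Q else P)"
  have \<delta>pos: "\<delta> > 0" using pq by (simp add: \<delta>_def p_def q_def)
  have spP: "space P = UNIV" using sets_eq_imp_space_eq[OF PS] by simp
  have spQ: "space Q = UNIV" using sets_eq_imp_space_eq[OF QS] by simp
  have npos: "n > 0" using k2 kn by simp
  have mval: "m = real k * (real k - 1) / 2" using choose2_real by (simp add: m_def)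
  have mpos: "m > 0" using k2 by (simp add: mval)
  have finK: "finite K" by (simp add: K_def finite_ksubsets)
  have cardK: "card K = n choose k" by (simp add: K_def card_ksubsets)
  have Kne: "card K > 0" using cardK kn by simp
  have KS: "S \<subseteq> {1..n}" "card S = k" "finite S" if "S \<in> K" for S
    using that by (auto simp: K_def ksubsets_def intro: finite_subset)
  have cardE: "card (edges_in S) = k choose 2" if "S \<in> K" for S
    using card_edges_in[of S] KS[OF that] by simp
  have cm: "real (card (edges_in S)) = m" if "S \<in> K" for S using cardE[OF that] by (simp add: m_def)
  have tm1: "t * m = m * p + \<delta> * m" by (simp add: t_def \<delta>_def field_simps)
  have tm2: "t * m = m * q - \<delta> * m" by (simp add: t_def \<delta>_def field_simps)
  have Esub: "edges_in S \<subseteq> edges n" if "S \<in> K" for S using edges_in_sub KS[OF that] by blast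
  have Ene: "edges_in S \<noteq> {}" if "S \<in> K" for S
  proof
    assume "edges_in S = {}"
    then have "k choose 2 = 0" using cardE[OF that] by simp
    then show False using k2 by simp
  qed
  have sp_obs: "space (obs_space n) = (\<Pi>\<^sub>E e\<in>edges n. UNIV)"
    by (simp add: obs_space_def space_PiM)
  have sp_null: "space (null_law n P) = (\<Pi>\<^sub>E e\<in>edges n. UNIV)"
    by (simp add: null_law_def space_PiM spP)
  have sp_pl: "space (planted_law n P Q S) = (\<Pi>\<^sub>E e\<in>edges n. UNIV)" for S
    unfolding planted_law_def space_PiM by (rule PiE_cong) (simp add: spP spQ)
  have sets_null: "sets (null_law n P) = sets (obs_space n)"
    unfolding null_law_def obs_space_def by (rule sets_PiM_cong) (auto simp: PS)
  have sets_pl: "sets (planted_law n P Q S) = sets (obs_space n)" for S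
    unfolding planted_law_def obs_space_def by (rule sets_PiM_cong) (auto simp: PS QS)
  have Nmeas: "N S \<in> borel_measurable (obs_space n)" if "S \<in> K" for S
  proof -
    have "(\<lambda>x. indicator B (x e) :: real) \<in> borel_measurable (obs_space n)" if "e \<in> edges n" for e
    proof -
      have "(\<lambda>x. x e) \<in> measurable (obs_space n) borel"
        using that unfolding obs_space_def by simp
      then show ?thesis using borel_measurable_indicator[OF B] by (rule measurable_compose)
    qed
    then show ?thesis unfolding N_def using Esub[OF that] by (intro borel_measurable_sum) auto
  qed
  have Umeas: "U S \<in> sets (obs_space n)" if "S \<in> K" for S
    using Nmeas[OF that] unfolding U_def by measurable
  have Ameas: "A \<in> sets (obs_space n)" unfolding A_def using Umeas finK by auto
  have E: "exp (-2 * (\<delta> * m)\<^sup>2 / m) = exp (- (\<delta>^2 * real k * (real k - 1)))"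
  proof -
    have e1: "-2 * (\<delta> * m)\<^sup>2 / m = -2 * \<delta>^2 * m" using mpos by (simp add: power2_eq_square)
    have e2: "-2 * \<delta>^2 * m = - (\<delta>^2 * real k * (real k - 1))" by (simp add: mval)
    show ?thesis using e1 e2 by simp
  qed
  define Eb where "Eb = exp (- (\<delta>^2 * real k * (real k - 1)))"
  have FSprob: "prob_space (FS S e)" for S e by (simp add: FS_def PP QQ)
  have FSsets: "sets (FS S e) = sets borel" for S e by (simp add: FS_def PS QS)
  have null1: "measure (null_law n P) (U S) \<le> Eb" if S: "S \<in> K" for S
  proof -
    have "U S = {x\<in>space (PiM (edges n) (\<lambda>_. P)). real (card (edges_in S)) * p + \<delta> * m \<le> (\<Sum>e\<in>edges_in S. indicator B (x e))}"
    proof -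
      have "t * m = real (card (edges_in S)) * p + \<delta> * m" using tm1 cm[OF S] by simp
      moreover have "space (obs_space n) = space (PiM (edges n) (\<lambda>_. P))"
        using sp_null sp_obs by (simp add: null_law_def)
      ultimately show ?thesis unfolding U_def N_def by simp
    qed
    then have "measure (null_law n P) (U S) = measure (PiM (edges n) (\<lambda>_. P)) {x\<in>space (PiM (edges n) (\<lambda>_. P)). real (card (edges_in S)) * p + \<delta> * m \<le> (\<Sum>e\<in>edges_in S. indicator B (x e))}"
      by (simp add: null_law_def)
    also have "\<dots> \<le> exp (-2 * (\<delta> * m)\<^sup>2 / real (card (edges_in S)))"
      by (rule hoeff(1)) (use PP PS finite_edges Esub[OF S] Ene[OF S] B \<delta>pos mpos in \<open>auto simp: p_def\<close>)
    finally show ?thesis using E cardE[OF S] by (simp add: Eb_def m_def)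
  qed
  have null: "measure (null_law n P) A \<le> real (card K) * Eb"
  proof -
    have "measure (null_law n P) A \<le> (\<Sum>S\<in>K. measure (null_law n P) (U S))"
      unfolding A_def by (rule measure_UNION_le[OF finK]) (use Umeas sets_null in auto)
    also have "\<dots> \<le> (\<Sum>S\<in>K. Eb)" by (rule sum_mono) (rule null1)
    finally show ?thesis by simp
  qed
  have alt1: "measure (planted_law n P Q S) (space (obs_space n) - A) \<le> Eb" if S: "S \<in> K" for S
  proof -
    have "space (obs_space n) - A \<subseteq> {x\<in>space (PiM (edges n) (FS S)). (\<Sum>e\<in>edges_in S. indicator B (x e)) \<le> real (card (edges_in S)) * q - \<delta> * m}"
    proof (rule subsetI)
      fix x assume x: "x \<in> space (obs_space n) - A"
      then have "x \<notin> U S" using S unfolding A_def by blast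
      with x have "\<not> t * m \<le> N S x" unfolding U_def by blast
      then have "N S x \<le> real (card (edges_in S)) * q - \<delta> * m" using tm2 cm[OF S] by simp
      moreover have "x \<in> space (PiM (edges n) (FS S))"
        using x sp_pl[of S] sp_obs by (simp add: planted_law_def FS_def)
      ultimately show "x \<in> {x\<in>space (PiM (edges n) (FS S)). (\<Sum>e\<in>edges_in S. indicator B (x e)) \<le> real (card (edges_in S)) * q - \<delta> * m}"
        by (simp add: N_def)
    qed
    then have "measure (planted_law n P Q S) (space (obs_space n) - A) \<le> measure (PiM (edges n) (FS S)) {x\<in>space (PiM (edges n) (FS S)). (\<Sum>e\<in>edges_in S. indicator B (x e)) \<le> real (card (edges_in S)) * q - \<delta> * m}"
    proof -
      assume sub: "space (obs_space n) - A \<subseteq> {x\<in>space (PiM (edges n) (FS S)). (\<Sum>e\<in>edges_in S. indicator B (x e)) \<le> real (card (edges_in S)) * q - \<delta> * m}"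
      have PL: "planted_law n P Q S = PiM (edges n) (FS S)" by (simp add: planted_law_def FS_def)
      interpret pl: prob_space "PiM (edges n) (FS S)" by (rule prob_space_PiM) (rule FSprob)
      have "{x\<in>space (PiM (edges n) (FS S)). (\<Sum>e\<in>edges_in S. indicator B (x e)) \<le> real (card (edges_in S)) * q - \<delta> * m} \<in> sets (PiM (edges n) (FS S))"
      proof -
        have MC: "measurable (planted_law n P Q S) borel = measurable (obs_space n) borel"
          by (rule measurable_cong_sets[OF sets_pl refl])
        have "N S \<in> borel_measurable (planted_law n P Q S)"
          unfolding MC by (rule Nmeas[OF S])
        then have "N S \<in> borel_measurable (PiM (edges n) (FS S))"
          unfolding PL .
        then show ?thesis unfolding N_def by measurable
      qed
      then have "measure (PiM (edges n) (FS S)) (space (obs_space n) - A) \<le> measure (PiM (edges n) (FS S)) {x\<in>space (PiM (edges n) (FS S)). (\<Sum>e\<in>edges_in S. indicator B (x e)) \<le> real (card (edges_in S)) * q - \<delta> * m}"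
        by (rule pl.finite_measure_mono[OF sub])
      then show ?thesis unfolding PL .
    qed
    also have "\<dots> \<le> exp (-2 * (\<delta> * m)\<^sup>2 / real (card (edges_in S)))"
      by (rule hoeff(2)) (use FSprob FSsets finite_edges Esub[OF S] Ene[OF S] B \<delta>pos mpos in \<open>auto simp: q_def FS_def\<close>)
    finally show ?thesis using E cardE[OF S] by (simp add: Eb_def m_def)
  qed
  have alt: "alt_prob n k P Q (space (obs_space n) - A) \<le> Eb"
  proof -
    have "(\<Sum>S\<in>K. measure (planted_law n P Q S) (space (obs_space n) - A)) \<le> (\<Sum>S\<in>K. Eb)"
      by (rule sum_mono) (rule alt1)
    then have "(\<Sum>S\<in>K. measure (planted_law n P Q S) (space (obs_space n) - A)) \<le> real (card K) * Eb" by simp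
    then show ?thesis using Kne unfolding alt_prob_def K_def[symmetric] by (simp add: divide_le_eq mult.commute)
  qed
  have bdd: "bdd_below ((\<lambda>A. measure (null_law n P) A + alt_prob n k P Q (space (obs_space n) - A)) ` sets (obs_space n))"
    by (rule bdd_belowI[of _ 0]) (auto simp: alt_prob_def intro!: add_nonneg_nonneg sum_nonneg divide_nonneg_nonneg)
  have "optimal_risk n k P Q \<le> measure (null_law n P) A + alt_prob n k P Q (space (obs_space n) - A)"
    unfolding optimal_risk_def by (rule cINF_lower[OF bdd Ameas])
  also have "\<dots> \<le> real (card K) * Eb + Eb" using null alt by simp
  also have "\<dots> \<le> real n ^ k * Eb + real n ^ k * Eb"
  proof -
    have "real (card K) \<le> real n ^ k" using cardK binomial_le_pow[OF kn]
      by (metis of_nat_le_iff of_nat_power)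
    moreover have "1 \<le> real n ^ k" using npos by simp
    ultimately show ?thesis by (intro add_mono mult_right_mono) (auto simp: Eb_def)
  qed
  also have "\<dots> = 2 * (exp (real k * ln (real n)) * Eb)"
  proof -
    have "exp (real k * ln (real n)) = real n ^ k"
      using npos by (simp only: exp_of_nat_mult exp_ln of_nat_0_less_iff)
    then show ?thesis by simp
  qed
  also have "\<dots> = 2 * exp (real k * ln (real n) - ((measure Q B - measure P B)/2)^2 * real k * (real k - 1))"
  proof -
    have "exp (real k * ln (real n)) * Eb = exp (real k * ln (real n) - \<delta>^2 * real k * (real k - 1))"
      unfolding Eb_def by (simp only: exp_add[symmetric] diff_conv_add_uminus)
    then show ?thesis by (simp add: \<delta>_def p_def q_def)
  qed
  finally show ?thesis .
qed

lemma risk_nonneg: "0 \<le> optimal_risk n k P Q"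
  unfolding optimal_risk_def
  by (rule cINF_greatest) (auto simp: alt_prob_def intro!: add_nonneg_nonneg sum_nonneg divide_nonneg_nonneg)

theorem mainTheorem5:
  fixes P Q :: "real measure"
  assumes "prob_space P" and "sets P = sets borel"
    and "prob_space Q" and "sets Q = sets borel"
    and "P \<noteq> Q"
  shows "\<exists>c>0. \<forall>k :: nat \<Rightarrow> nat.
           (\<forall>n\<ge>2. 2 \<le> k n \<and> k n \<le> n) \<longrightarrow>
           (\<forall>\<^sub>F n in sequentially. c * ln (real n) \<le> real (k n)) \<longrightarrow>
           (\<lambda>n. optimal_risk n (k n) P Q) \<longlonglongrightarrow> 0"
proof -
  obtain B where B: "B \<in> sets borel" and pq: "measure P B < measure Q B"
    using choose_B[OF assms] by blast
  define \<delta> where "\<delta> = (measure Q B - measure P B) / 2"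
  have \<delta>pos: "\<delta> > 0" using pq by (simp add: \<delta>_def)
  define c where "c = 4 / \<delta>^2"
  have cpos: "c > 0" using \<delta>pos by (simp add: c_def)
  show ?thesis
  proof (intro exI[of _ c] conjI allI impI cpos)
    fix k :: "nat \<Rightarrow> nat"
    assume kr: "\<forall>n\<ge>2. 2 \<le> k n \<and> k n \<le> n"
    assume ev: "\<forall>\<^sub>F n in sequentially. c * ln (real n) \<le> real (k n)"
    have bound: "optimal_risk n (k n) P Q \<le> 2 / real n"
      if n2: "n \<ge> 2" and ck: "c * ln (real n) \<le> real (k n)" for n
    proof -
      have k2: "2 \<le> k n" and kn: "k n \<le> n" using kr n2 by auto
      define K where "K = real (k n)"
      define L where "L = ln (real n)"
      have K2: "K \<ge> 2" using k2 by (simp add: K_def)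
      have L0: "L \<ge> 0" using n2 by (simp add: L_def)
      have cL: "4 * L \<le> \<delta>^2 * K" using ck \<delta>pos
        by (simp add: c_def K_def L_def field_simps)
      have h1: "\<delta>^2 * K \<le> 2 * (\<delta>^2 * (K - 1))" using K2 \<delta>pos by (simp add: algebra_simps)
      have h2: "2 * L \<le> \<delta>^2 * (K - 1)" using cL h1 by linarith
      have h3: "K * (2 * L) \<le> K * (\<delta>^2 * (K - 1))" using h2 K2 by (intro mult_left_mono) auto
      have "1 * L \<le> K * L" using K2 L0 by (intro mult_right_mono) auto
      then have h4: "L \<le> K * L" by simp
      have ex: "K * L - \<delta>^2 * K * (K - 1) \<le> - L" using h3 h4 by (simp add: algebra_simps)
      have "optimal_risk n (k n) P Q \<le> 2 * exp (K * L - \<delta>^2 * K * (K - 1))"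
        using risk_bound[OF assms(1-4) B pq k2 kn] by (simp add: K_def L_def \<delta>_def)
      also have "\<dots> \<le> 2 * exp (- L)" using ex by simp
      also have "\<dots> = 2 / real n" using n2 by (simp add: L_def exp_minus divide_inverse)
      finally show ?thesis .
    qed
    have ev2: "\<forall>\<^sub>F n in sequentially. optimal_risk n (k n) P Q \<le> 2 / real n"
      using ev eventually_ge_at_top[of 2] by eventually_elim (use bound in auto)
    show "(\<lambda>n. optimal_risk n (k n) P Q) \<longlonglongrightarrow> 0"
    proof (rule real_tendsto_sandwich[OF _ ev2])
      show "\<forall>\<^sub>F n in sequentially. 0 \<le> optimal_risk n (k n) P Q" by (simp add: risk_nonneg)
      show "(\<lambda>n. 0) \<longlonglongrightarrow> (0::real)" by simp
      show "(\<lambda>n. 2 / real n) \<longlonglongrightarrow> 0" by (rule lim_const_over_n)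
    qed
  qed
qed

end
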